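(* Let $m\le n$ be positive integers and $\eta\in[0,1]$, $\zeta,\Delta,\alpha$ reals with $\Delta>0$ and $\alpha\ge 2\Delta+\zeta$. Let $\mathbf{A}'$ be an $(\eta,n(1-\zeta))$-block source over $\mathbb{F}_2^{m\times n}$ and $\mathbf{x}$ a random variable over $\mathbb{F}_2^n$ independent of $\mathbf{A}'$ with $H_\infty(\mathbf{x})\ge\alpha n$. Then there exists $T\subseteq[m]$ with $|T|\ge(1-\eta)m$ such that $(\mathbf{A}'\mathbf{x})_T$ (the coordinates of $\mathbf{A}'\mathbf{x}\in\mathbb{F}_2^m$ indexed by $T$) is within statistical distance $|T|\cdot 2^{-\Delta n}$ of the uniform distribution on $\mathbb{F}_2^{|T|}$.
   Context: $H_\infty(X)=-\log_2\max_x\Pr[X=x]$. For a matrix $A$, $A_i$ is its $i$-th row and $A_{[i]}$ its first $i$ rows. A random variable $\mathbf{A}'$ over $\mathbb{F}_2^{m\times n}$ is an $(\eta,n')$-block source if there exists $S\subseteq[m]$ with $|S|\le\eta m$ such that for every $A\in\mathrm{supp}(\mathbf{A}')$ and every $i\notin S$, $H_\infty(\mathbf{A}'_i\mid\mathbf{A}'_{[i-1]}=A_{[i-1]})\ge n'$. *)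

theory Defs
  imports "HOL-Probability.Probability_Mass_Function"
begin

text \<open>Elements of F_2 are booleans (True = 1). A vector in F_2^n is a bool list of
length n; an m x n matrix is a list of m rows, each a bool list of length n.
Rows are indexed 0..m-1 (paper: 1..m).\<close>

definition dot2 :: "bool list \<Rightarrow> bool list \<Rightarrow> bool" where
  "dot2 r x = odd (length (filter id (map2 (\<and>) r x)))"

definition mat_vec2 :: "bool list list \<Rightarrow> bool list \<Rightarrow> bool list" where
  "mat_vec2 A x = map (\<lambda>r. dot2 r x) A"

definition is_matrix :: "nat \<Rightarrow> nat \<Rightarrow> bool list list \<Rightarrow> bool" where
  "is_matrix m n A \<longleftrightarrow> length A = m \<and> (\<forall>r\<in>set A. length r = n)"

definition min_entropy :: "'a pmf \<Rightarrow> real" where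
  "min_entropy X = - log 2 (Sup (pmf X ` UNIV))"

definition block_source :: "real \<Rightarrow> real \<Rightarrow> nat \<Rightarrow> bool list list pmf \<Rightarrow> bool" where
  "block_source \<eta> n' m A \<longleftrightarrow>
     (\<exists>S \<subseteq> {..<m}. real (card S) \<le> \<eta> * real m \<and>
        (\<forall>A0 \<in> set_pmf A. \<forall>i<m. i \<notin> S \<longrightarrow>
           min_entropy (map_pmf (\<lambda>B. B ! i) (cond_pmf A {B. take i B = take i A0})) \<ge> n'))"

definition stat_dist :: "'a pmf \<Rightarrow> 'a pmf \<Rightarrow> real" where
  "stat_dist p q = (1/2) * (\<Sum>z \<in> set_pmf p \<union> set_pmf q. \<bar>pmf p z - pmf q z\<bar>)"

end

theory Submission
  imports Defs
begin


definition LL :: "'r set \<Rightarrow> nat \<Rightarrow> 'r list set" where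
  "LL R m = {B. set B \<subseteq> R \<and> length B = m}"

lemma LL_finite: "finite R \<Longrightarrow> finite (LL R m)"
  unfolding LL_def by (rule finite_lists_length_eq)

lemma LL_0[simp]: "LL R 0 = {[]}" unfolding LL_def by auto

lemma LL_Suc: "LL R (Suc m) = (\<lambda>(r,B). r # B) ` (R \<times> LL R m)"
  unfolding LL_def by (auto simp: image_iff length_Suc_conv)

lemma sum_LL_Suc:
  assumes "finite R"
  shows "(\<Sum>B\<in>LL R (Suc m). f B) = (\<Sum>r\<in>R. \<Sum>B\<in>LL R m. f (r # B))"
proof -
  have inj: "inj_on (\<lambda>(r,B). r # B) (R \<times> LL R m)" by (auto simp: inj_on_def)
  have "(\<Sum>B\<in>LL R (Suc m). f B) = (\<Sum>z\<in>R \<times> LL R m. f ((\<lambda>(r,B). r # B) z))"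
    unfolding LL_Suc by (rule sum.reindex[OF inj, unfolded comp_def])
  also have "\<dots> = (\<Sum>r\<in>R. \<Sum>B\<in>LL R m. f (r # B))"
    by (subst sum.cartesian_product) (simp add: case_prod_beta)
  finally show ?thesis .
qed

lemma LL_UNIV: "LL UNIV k = {w. length w = k}" unfolding LL_def by auto

lemma card_LL_bool: "card (LL (UNIV::bool set) k) = 2 ^ k"
  using card_lists_length_eq[of "UNIV::bool set" k] unfolding LL_def by simp

definition sg :: "bool \<Rightarrow> real" where "sg b = (if b then -1 else 1)"

lemma dot2_Cons: "dot2 (a # r) (c # v) = ((a \<and> c) \<noteq> dot2 r v)"
  unfolding dot2_def by auto

lemma dot2_Nil: "dot2 [] v = False" unfolding dot2_def by auto

lemma orth:
  assumes "r \<in> LL UNIV n" "r' \<in> LL UNIV n"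
  shows "(\<Sum>v\<in>LL UNIV n. sg (dot2 r v) * sg (dot2 r' v)) = (if r = r' then 2 ^ n else 0)"
  using assms
proof (induction n arbitrary: r r')
  case 0 then show ?case by (simp add: sg_def dot2_Nil)
next
  case (Suc n)
  obtain a r0 where r: "r = a # r0" "r0 \<in> LL UNIV n" using Suc.prems(1) unfolding LL_Suc by auto
  obtain b r0' where r': "r' = b # r0'" "r0' \<in> LL UNIV n" using Suc.prems(2) unfolding LL_Suc by auto
  have "(\<Sum>v\<in>LL UNIV (Suc n). sg (dot2 r v) * sg (dot2 r' v))
     = (\<Sum>c\<in>UNIV. \<Sum>v\<in>LL UNIV n. (sg (a \<and> c) * sg (b \<and> c)) * (sg (dot2 r0 v) * sg (dot2 r0' v)))"
    by (subst sum_LL_Suc) (auto simp: r(1) r'(1) dot2_Cons sg_def intro!: sum.cong)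
  also have "\<dots> = (\<Sum>c\<in>UNIV. (sg (a \<and> c) * sg (b \<and> c)) * (if r0 = r0' then 2 ^ n else 0))"
    by (simp add: sum_distrib_left[symmetric] Suc.IH r(2) r'(2))
  also have "\<dots> = (if r = r' then 2 ^ Suc n else 0)"
    by (cases a; cases b) (auto simp: r r' sg_def UNIV_bool)
  finally show ?case .
qed

lemma parseval:
  fixes q :: "bool list \<Rightarrow> real"
  shows "(\<Sum>v\<in>LL UNIV n. (\<Sum>r\<in>LL UNIV n. q r * sg (dot2 r v))^2) = 2 ^ n * (\<Sum>r\<in>LL UNIV n. (q r)^2)"
proof -
  let ?L = "LL (UNIV::bool set) n"
  have fin: "finite ?L" by (simp add: LL_finite)
  have "(\<Sum>v\<in>?L. (\<Sum>r\<in>?L. q r * sg (dot2 r v))^2)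
      = (\<Sum>v\<in>?L. \<Sum>r\<in>?L. \<Sum>r'\<in>?L. q r * q r' * (sg (dot2 r v) * sg (dot2 r' v)))"
    unfolding power2_eq_square sum_product by (intro sum.cong refl) (simp add: ac_simps)
  also have "\<dots> = (\<Sum>r\<in>?L. \<Sum>v\<in>?L. \<Sum>r'\<in>?L. q r * q r' * (sg (dot2 r v) * sg (dot2 r' v)))"
    by (rule sum.swap[of "\<lambda>v r. \<Sum>r'\<in>?L. q r * q r' * (sg (dot2 r v) * sg (dot2 r' v))"])
  also have "\<dots> = (\<Sum>r\<in>?L. \<Sum>r'\<in>?L. \<Sum>v\<in>?L. q r * q r' * (sg (dot2 r v) * sg (dot2 r' v)))"
    by (rule sum.cong[OF refl], rule sum.swap)
  also have "\<dots> = (\<Sum>r\<in>?L. \<Sum>r'\<in>?L. q r * q r' * (\<Sum>v\<in>?L. sg (dot2 r v) * sg (dot2 r' v)))"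
    by (simp only: sum_distrib_left)
  also have "\<dots> = (\<Sum>r\<in>?L. \<Sum>r'\<in>?L. (if r = r' then q r * q r * 2 ^ n else 0))"
    by (intro sum.cong refl) (simp add: orth)
  also have "\<dots> = (\<Sum>r\<in>?L. q r * q r * 2 ^ n)"
    by (intro sum.cong refl) (simp add: fin)
  also have "\<dots> = 2 ^ n * (\<Sum>r\<in>?L. (q r)^2)"
    by (simp add: sum_distrib_left power2_eq_square ac_simps)
  finally show ?thesis .
qed



definition bias :: "('r list \<Rightarrow> real) \<Rightarrow> ('r \<Rightarrow> bool) \<Rightarrow> nat \<Rightarrow> nat \<Rightarrow> 'r set \<Rightarrow> real" where
  "bias p h i m R = (\<Sum>a\<in>LL R i. \<bar>\<Sum>B\<in>LL R m. (if take i B = a then p B * sg (h (B!i)) else 0)\<bar>)"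

definition dev :: "('r list \<Rightarrow> real) \<Rightarrow> ('r \<Rightarrow> bool) \<Rightarrow> nat set \<Rightarrow> nat \<Rightarrow> 'r set \<Rightarrow> real" where
  "dev p h T m R = (\<Sum>w\<in>LL UNIV (card T).
      \<bar>(\<Sum>B\<in>LL R m. (if nths (map h B) T = w then p B else 0)) - (\<Sum>B\<in>LL R m. p B) / 2 ^ card T\<bar>)"

lemma sum_delta_conj:
  assumes "finite R" "r0 \<in> R"
  shows "(\<Sum>r\<in>R. \<Sum>B\<in>S. (if r = r0 \<and> C B then X r B else 0)) = (\<Sum>B\<in>S. (if C B then X r0 B else 0))"
proof -
  have "(\<Sum>r\<in>R. \<Sum>B\<in>S. (if r = r0 \<and> C B then X r B else 0))
      = (\<Sum>r\<in>R. if r = r0 then (\<Sum>B\<in>S. (if C B then X r B else 0)) else 0)"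
    by (intro sum.cong refl) auto
  also have "\<dots> = (\<Sum>B\<in>S. (if C B then X r0 B else 0))" using assms by simp
  finally show ?thesis .
qed

lemma bias_Suc:
  assumes "finite R"
  shows "bias p h (Suc i) (Suc m) R = (\<Sum>r\<in>R. bias (\<lambda>B. p (r # B)) h i m R)"
proof -
  have "bias p h (Suc i) (Suc m) R = (\<Sum>r0\<in>R. \<Sum>a\<in>LL R i.
       \<bar>\<Sum>r\<in>R. \<Sum>B\<in>LL R m. (if r = r0 \<and> take i B = a then p (r # B) * sg (h (B!i)) else 0)\<bar>)"
    unfolding bias_def using assms
    by (simp add: sum_LL_Suc del: One_nat_def) (intro sum.cong refl arg_cong[where f=abs]; auto)
  also have "\<dots> = (\<Sum>r\<in>R. bias (\<lambda>B. p (r # B)) h i m R)"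
    unfolding bias_def using assms by (intro sum.cong refl) (simp add: sum_delta_conj)
  finally show ?thesis .
qed

lemma bias_0:
  assumes "finite R"
  shows "bias p h 0 (Suc m) R = \<bar>\<Sum>r\<in>R. (\<Sum>B\<in>LL R m. p (r # B)) * sg (h r)\<bar>"
  unfolding bias_def using assms by (simp add: sum_LL_Suc sum_distrib_right)



lemma extractor:
  fixes q xx :: "bool list \<Rightarrow> real"
  assumes q0: "\<forall>r. 0 \<le> q r" and qs: "(\<Sum>r\<in>LL UNIV n. q r) \<le> 1" and qb: "\<forall>r. q r \<le> b1"
    and x0: "\<forall>v. 0 \<le> xx v" and xs: "(\<Sum>v\<in>LL UNIV n. xx v) = 1" and xb: "\<forall>v. xx v \<le> b2"
  shows "(\<Sum>v\<in>LL UNIV n. xx v * \<bar>\<Sum>r\<in>LL UNIV n. q r * sg (dot2 r v)\<bar>) \<le> sqrt (b2 * 2^n * b1)"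
proof -
  let ?L = "LL (UNIV::bool set) n"
  define F where "F v = (\<Sum>r\<in>?L. q r * sg (dot2 r v))" for v
  have b1: "0 \<le> b1" using q0 qb by (meson order_trans)
  have "(\<Sum>v\<in>?L. xx v * \<bar>F v\<bar>)^2 = (\<Sum>v\<in>?L. sqrt (xx v) * (sqrt (xx v) * \<bar>F v\<bar>))^2"
    using x0 by (simp add: mult.assoc[symmetric])
  also have "\<dots> \<le> (\<Sum>v\<in>?L. (sqrt (xx v))^2) * (\<Sum>v\<in>?L. (sqrt (xx v) * \<bar>F v\<bar>)^2)"
    by (rule Cauchy_Schwarz_ineq_sum)
  also have "\<dots> = (\<Sum>v\<in>?L. xx v * (F v)^2)"
    using x0 xs by (simp add: power_mult_distrib)
  also have "\<dots> \<le> (\<Sum>v\<in>?L. b2 * (F v)^2)"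
    using xb by (intro sum_mono mult_right_mono) auto
  also have "\<dots> = b2 * (2 ^ n * (\<Sum>r\<in>?L. (q r)^2))"
    by (simp add: sum_distrib_left[symmetric] F_def parseval)
  also have "\<dots> \<le> b2 * (2 ^ n * b1)"
  proof -
    have "(\<Sum>r\<in>?L. (q r)^2) \<le> (\<Sum>r\<in>?L. b1 * q r)"
      using q0 qb by (intro sum_mono) (simp add: power2_eq_square mult_right_mono)
    also have "\<dots> \<le> b1" using qs b1 by (simp add: sum_distrib_left[symmetric] mult_left_le)
    finally have "(\<Sum>r\<in>?L. (q r)^2) \<le> b1" .
    moreover have "0 \<le> b2" using x0 xb by (meson order_trans)
    ultimately show ?thesis by (intro mult_left_mono) auto
  qed
  finally show ?thesis unfolding F_def by (intro real_le_rsqrt) (simp add: ac_simps)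
qed



lemma sum_LL_bool_Suc: "(\<Sum>w\<in>LL (UNIV::bool set) (Suc k). f w) = (\<Sum>b\<in>UNIV. \<Sum>w\<in>LL UNIV k. f (b # w))"
  by (rule sum_LL_Suc) simp

lemma step_not0:
  assumes R: "finite R" and T0: "0 \<notin> T" and T'def: "T' = {j. Suc j \<in> T}" and fT: "finite T"
    and IH: "\<And>r. dev (\<lambda>B. p (r # B)) h T' m R \<le> (\<Sum>i\<in>T'. bias (\<lambda>B. p (r # B)) h i m R)"
  shows "dev p h T (Suc m) R \<le> (\<Sum>i\<in>T. bias p h i (Suc m) R)"
proof -
  have TT: "T = Suc ` T'" using T0 T'def by (auto simp: image_iff) (metis not0_implies_Suc)
  have cT: "card T = card T'" unfolding TT by (simp add: card_image)
  let ?t = "card T'"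
  have nth: "nths (h r # map h B) T = nths (map h B) T'" for r B
    using T0 T'def by (simp add: nths_Cons)
  define G where "G r w = (\<Sum>B\<in>LL R m. (if nths (map h B) T' = w then p (r # B) else 0))" for r w
  define M where "M r = (\<Sum>B\<in>LL R m. p (r # B))" for r
  have "dev p h T (Suc m) R = (\<Sum>w\<in>LL UNIV ?t. \<bar>\<Sum>r\<in>R. (G r w - M r / 2 ^ ?t)\<bar>)"
    unfolding dev_def cT using R
    by (simp add: sum_LL_Suc nth G_def M_def sum_subtractf sum_divide_distrib)
  also have "\<dots> \<le> (\<Sum>w\<in>LL UNIV ?t. \<Sum>r\<in>R. \<bar>G r w - M r / 2 ^ ?t\<bar>)"
    by (intro sum_mono sum_abs)
  also have "\<dots> = (\<Sum>r\<in>R. dev (\<lambda>B. p (r # B)) h T' m R)"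
    unfolding dev_def G_def M_def by (rule sum.swap)
  also have "\<dots> \<le> (\<Sum>r\<in>R. \<Sum>i\<in>T'. bias (\<lambda>B. p (r # B)) h i m R)"
    by (intro sum_mono IH)
  also have "\<dots> = (\<Sum>i\<in>T'. bias p h (Suc i) (Suc m) R)"
    using R by (simp add: bias_Suc sum.swap[of _ T'])
  also have "\<dots> = (\<Sum>i\<in>T. bias p h i (Suc m) R)"
    unfolding TT by (simp add: sum.reindex)
  finally show ?thesis .
qed

lemma step_in0:
  assumes R: "finite R" and T0: "0 \<in> T" and T'def: "T' = {j. Suc j \<in> T}" and fT: "finite T"
    and IH: "\<And>r. dev (\<lambda>B. p (r # B)) h T' m R \<le> (\<Sum>i\<in>T'. bias (\<lambda>B. p (r # B)) h i m R)"
  shows "dev p h T (Suc m) R \<le> (\<Sum>i\<in>T. bias p h i (Suc m) R)"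
proof -
  have TT: "T = insert 0 (Suc ` T')" using T0 T'def by (auto simp: image_iff) (metis not0_implies_Suc)
  have fT': "finite T'" using fT TT by (metis finite_imageD finite_insert inj_Suc inj_on_subset subset_UNIV)
  have cT: "card T = Suc (card T')" unfolding TT using fT' by (simp add: card_image image_iff)
  let ?t = "card T'"
  have nth: "nths (h r # map h B) T = h r # nths (map h B) T'" for r B
    using T0 T'def by (simp add: nths_Cons)
  define G where "G r w = (\<Sum>B\<in>LL R m. (if nths (map h B) T' = w then p (r # B) else 0))" for r w
  define M where "M r = (\<Sum>B\<in>LL R m. p (r # B))" for r
  define Mb where "Mb b = (\<Sum>r\<in>R. if h r = b then M r else 0)" for b
  have mass: "(\<Sum>B\<in>LL R (Suc m). p B) = Mb True + Mb False"
    unfolding Mb_def M_def using R by (auto simp add: sum_LL_Suc sum.distrib[symmetric] intro!: sum.cong)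
  have inner: "(\<Sum>B\<in>LL R (Suc m). (if h (hd B) # nths (map h (tl B)) T' = b # w then p B else 0))
     = (\<Sum>r\<in>R. if h r = b then G r w else 0)" for b w
    unfolding G_def using R by (simp add: sum_LL_Suc) (intro sum.cong refl; simp)
  have "dev p h T (Suc m) R = (\<Sum>b\<in>UNIV. \<Sum>w\<in>LL UNIV ?t.
      \<bar>(\<Sum>r\<in>R. if h r = b then G r w else 0) - (Mb True + Mb False) / 2 ^ Suc ?t\<bar>)"
  proof -
    have e: "(\<Sum>B\<in>LL R (Suc m). (if nths (map h B) T = w then p B else 0))
        = (\<Sum>B\<in>LL R (Suc m). (if h (hd B) # nths (map h (tl B)) T' = w then p B else 0))" for w
      using R by (simp add: sum_LL_Suc nth)
    show ?thesis unfolding dev_def cT sum_LL_bool_Suc e inner mass by simp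
  qed
  also have "\<dots> \<le> (\<Sum>b\<in>UNIV. \<Sum>w\<in>LL UNIV ?t.
      ((\<Sum>r\<in>R. if h r = b then \<bar>G r w - M r / 2 ^ ?t\<bar> else 0)
        + \<bar>Mb b / 2 ^ ?t - (Mb True + Mb False) / 2 ^ Suc ?t\<bar>))"
  proof (intro sum_mono)
    fix b w
    have "(\<Sum>r\<in>R. if h r = b then G r w else 0) - (Mb True + Mb False) / 2 ^ Suc ?t
        = (\<Sum>r\<in>R. if h r = b then G r w - M r / 2 ^ ?t else 0)
          + (Mb b / 2 ^ ?t - (Mb True + Mb False) / 2 ^ Suc ?t)"
    proof -
      have "(\<Sum>r\<in>R. if h r = b then G r w - M r / 2 ^ ?t else 0)
          = (\<Sum>r\<in>R. (if h r = b then G r w else 0) - (if h r = b then M r else 0) / 2 ^ ?t)"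
        by (intro sum.cong refl) auto
      also have "\<dots> = (\<Sum>r\<in>R. if h r = b then G r w else 0) - Mb b / 2 ^ ?t"
        unfolding Mb_def by (simp add: sum_subtractf sum_divide_distrib)
      finally show ?thesis by simp
    qed
    also have "\<bar>\<dots>\<bar> \<le> \<bar>\<Sum>r\<in>R. if h r = b then G r w - M r / 2 ^ ?t else 0\<bar>
          + \<bar>Mb b / 2 ^ ?t - (Mb True + Mb False) / 2 ^ Suc ?t\<bar>" by (rule abs_triangle_ineq)
    also have "\<bar>\<Sum>r\<in>R. if h r = b then G r w - M r / 2 ^ ?t else 0\<bar>
        \<le> (\<Sum>r\<in>R. \<bar>if h r = b then G r w - M r / 2 ^ ?t else 0\<bar>)" by (rule sum_abs)
    also have "\<dots> = (\<Sum>r\<in>R. if h r = b then \<bar>G r w - M r / 2 ^ ?t\<bar> else 0)"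
      by (intro sum.cong refl) auto
    finally show "\<bar>(\<Sum>r\<in>R. if h r = b then G r w else 0) - (Mb True + Mb False) / 2 ^ Suc ?t\<bar>
       \<le> (\<Sum>r\<in>R. if h r = b then \<bar>G r w - M r / 2 ^ ?t\<bar> else 0)
        + \<bar>Mb b / 2 ^ ?t - (Mb True + Mb False) / 2 ^ Suc ?t\<bar>" by simp
  qed
  also have "\<dots> = (\<Sum>b\<in>UNIV. (\<Sum>r\<in>R. if h r = b then dev (\<lambda>B. p (r # B)) h T' m R else 0)
        + 2 ^ ?t * \<bar>Mb b / 2 ^ ?t - (Mb True + Mb False) / 2 ^ Suc ?t\<bar>)"
  proof (intro sum.cong refl)
    fix b :: bool
    have "(\<Sum>w\<in>LL UNIV ?t. \<Sum>r\<in>R. if h r = b then \<bar>G r w - M r / 2 ^ ?t\<bar> else 0)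
       = (\<Sum>r\<in>R. \<Sum>w\<in>LL UNIV ?t. if h r = b then \<bar>G r w - M r / 2 ^ ?t\<bar> else 0)"
      by (rule sum.swap)
    also have "\<dots> = (\<Sum>r\<in>R. if h r = b then dev (\<lambda>B. p (r # B)) h T' m R else 0)"
      unfolding dev_def G_def M_def by (intro sum.cong refl) auto
    finally show "(\<Sum>w\<in>LL UNIV ?t. ((\<Sum>r\<in>R. if h r = b then \<bar>G r w - M r / 2 ^ ?t\<bar> else 0)
        + \<bar>Mb b / 2 ^ ?t - (Mb True + Mb False) / 2 ^ Suc ?t\<bar>))
      = (\<Sum>r\<in>R. if h r = b then dev (\<lambda>B. p (r # B)) h T' m R else 0)
        + 2 ^ ?t * \<bar>Mb b / 2 ^ ?t - (Mb True + Mb False) / 2 ^ Suc ?t\<bar>"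
      by (simp add: sum.distrib card_LL_bool)
  qed
  also have "\<dots> = (\<Sum>r\<in>R. dev (\<lambda>B. p (r # B)) h T' m R) + \<bar>Mb False - Mb True\<bar>"
  proof -
    have a: "2 ^ ?t * \<bar>Mb b / 2 ^ ?t - (Mb True + Mb False) / 2 ^ Suc ?t\<bar>
        = \<bar>Mb b - (Mb True + Mb False) / 2\<bar>" for b
    proof -
      have "2 ^ ?t * \<bar>Mb b / 2 ^ ?t - (Mb True + Mb False) / 2 ^ Suc ?t\<bar>
          = \<bar>2 ^ ?t * (Mb b / 2 ^ ?t - (Mb True + Mb False) / 2 ^ Suc ?t)\<bar>"
        by (simp add: abs_mult)
      also have "2 ^ ?t * (Mb b / 2 ^ ?t - (Mb True + Mb False) / 2 ^ Suc ?t)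
          = Mb b - (Mb True + Mb False) / 2"
        by (simp add: field_simps)
      finally show ?thesis .
    qed
    have b: "(\<Sum>b\<in>UNIV. \<Sum>r\<in>R. if h r = b then d r else 0) = (\<Sum>r\<in>R. d r)" for d :: "'a \<Rightarrow> real"
      by (auto simp add: UNIV_bool sum.distrib[symmetric] intro!: sum.cong)
    show ?thesis unfolding a sum.distrib b by (simp add: UNIV_bool) (simp add: abs_if field_simps)
  qed
  also have "\<dots> \<le> (\<Sum>r\<in>R. \<Sum>i\<in>T'. bias (\<lambda>B. p (r # B)) h i m R) + bias p h 0 (Suc m) R"
  proof (intro add_mono sum_mono IH)
    have "(\<Sum>r\<in>R. M r * sg (h r)) = Mb False - Mb True"
      unfolding Mb_def by (auto simp add: sum_subtractf[symmetric] sg_def intro!: sum.cong)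
    then show "\<bar>Mb False - Mb True\<bar> \<le> bias p h 0 (Suc m) R"
      using R by (simp add: bias_0 M_def)
  qed
  also have "\<dots> = (\<Sum>i\<in>T. bias p h i (Suc m) R)"
  proof -
    have "(\<Sum>r\<in>R. \<Sum>i\<in>T'. bias (\<lambda>B. p (r # B)) h i m R) = (\<Sum>i\<in>T'. bias p h (Suc i) (Suc m) R)"
      using R by (simp add: bias_Suc sum.swap[of _ T'])
    also have "\<dots> = (\<Sum>i\<in>Suc ` T'. bias p h i (Suc m) R)" by (simp add: sum.reindex)
    finally show ?thesis unfolding TT using fT' by (simp add: image_iff)
  qed
  finally show ?thesis .
qed



lemma hybrid:
  assumes "finite R" "T \<subseteq> {..<m}"
  shows "dev p h T m R \<le> (\<Sum>i\<in>T. bias p h i m R)"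
  using assms(2)
proof (induction m arbitrary: p T)
  case 0
  then have "T = {}" by auto
  then show ?case by (simp add: dev_def)
next
  case (Suc m)
  define T' where "T' = {j. Suc j \<in> T}"
  have T': "T' \<subseteq> {..<m}" using Suc.prems unfolding T'_def by auto
  have fT: "finite T" using Suc.prems finite_subset by blast
  have IH: "dev (\<lambda>B. p (r # B)) h T' m R \<le> (\<Sum>i\<in>T'. bias (\<lambda>B. p (r # B)) h i m R)" for r
    using Suc.IH[OF T'] .
  show ?case
  proof (cases "0 \<in> T")
    case True
    show ?thesis by (rule step_in0[OF assms(1) True T'_def fT IH])
  next
    case False
    show ?thesis by (rule step_not0[OF assms(1) False T'_def fT IH])
  qed
qed

lemma pmf_map_sum:
  assumes "finite F" "set_pmf M \<subseteq> F"
  shows "pmf (map_pmf f M) w = (\<Sum>z\<in>F. if f z = w then pmf M z else 0)"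
proof -
  have "pmf (map_pmf f M) w = measure M (f -` {w})" by (rule pmf_map)
  also have "\<dots> = measure M (f -` {w} \<inter> set_pmf M)" by (rule measure_Int_set_pmf[symmetric])
  also have "f -` {w} \<inter> set_pmf M = (F \<inter> f -` {w}) \<inter> set_pmf M" using assms(2) by auto
  also have "measure M \<dots> = measure M (F \<inter> f -` {w})" by (rule measure_Int_set_pmf)
  also have "\<dots> = sum (pmf M) (F \<inter> f -` {w})" using assms(1) by (simp add: measure_measure_pmf_finite)
  also have "\<dots> = (\<Sum>z\<in>F. if f z = w then pmf M z else 0)"
    using assms(1) by (simp add: sum.inter_filter[symmetric] vimage_def Int_def)
  finally show ?thesis .
qed

lemma measure_sum:
  assumes "finite F" "set_pmf M \<subseteq> F"
  shows "measure M E = (\<Sum>z\<in>F. if z \<in> E then pmf M z else 0)"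
proof -
  have "measure M E = measure M (E \<inter> set_pmf M)" by (rule measure_Int_set_pmf[symmetric])
  also have "E \<inter> set_pmf M = (F \<inter> E) \<inter> set_pmf M" using assms(2) by auto
  also have "measure M \<dots> = measure M (F \<inter> E)" by (rule measure_Int_set_pmf)
  also have "\<dots> = sum (pmf M) (F \<inter> E)" using assms(1) by (simp add: measure_measure_pmf_finite)
  also have "\<dots> = (\<Sum>z\<in>F. if z \<in> E then pmf M z else 0)"
    using assms(1) by (simp add: sum.inter_filter[symmetric] Int_def)
  finally show ?thesis .
qed

lemma min_entropy_bound:
  assumes "min_entropy X \<ge> k"
  shows "pmf X y \<le> 2 powr (-k)"
proof -
  let ?s = "Sup (pmf X ` UNIV)"
  have bdd: "bdd_above (pmf X ` UNIV)" by (rule bdd_aboveI[of _ 1]) (auto simp: pmf_le_1)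
  have le: "pmf X z \<le> ?s" for z by (rule cSup_upper[OF _ bdd]) auto
  obtain y0 where "y0 \<in> set_pmf X" using set_pmf_not_empty by fast
  then have "0 < pmf X y0" using pmf_nonneg[of X y0] by (simp add: set_pmf_iff less_le)
  then have pos: "0 < ?s" using le[of y0] by linarith
  have "log 2 ?s \<le> -k" using assms unfolding min_entropy_def by simp
  then have "2 powr (log 2 ?s) \<le> 2 powr (-k)" by (rule powr_mono) auto
  then have "?s \<le> 2 powr (-k)" using pos by (simp only: powr_log_cancel)
  then show ?thesis using le[of y] by simp
qed

lemma numeric:
  fixes n :: nat and \<zeta> \<Delta> \<alpha> :: real
  assumes "\<alpha> \<ge> 2 * \<Delta> + \<zeta>"
  shows "sqrt (2 powr (- (\<alpha> * real n)) * 2 ^ n * 2 powr (- (real n * (1 - \<zeta>)))) \<le> 2 powr (- \<Delta> * real n)"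
proof (rule real_le_lsqrt)
  show "0 \<le> 2 powr (- \<Delta> * real n)" by simp
  have "2 powr (- (\<alpha> * real n)) * 2 ^ n * 2 powr (- (real n * (1 - \<zeta>)))
      = 2 powr (- (\<alpha> * real n) + real n + - (real n * (1 - \<zeta>)))"
    unfolding powr_add using powr_realpow[of 2 n] by simp
  also have "\<dots> \<le> 2 powr (2 * (- \<Delta> * real n))"
  proof (rule powr_mono)
    have "(\<alpha> - 2 * \<Delta> - \<zeta>) * real n \<ge> 0" using assms by simp
    then show "- (\<alpha> * real n) + real n + - (real n * (1 - \<zeta>)) \<le> 2 * (- \<Delta> * real n)"
      by (simp add: algebra_simps)
  qed simp
  also have "\<dots> = (2 powr (- \<Delta> * real n))^2"
    by (simp add: powr_realpow[symmetric] powr_powr power2_eq_square powr_add[symmetric])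
  finally show "2 powr (- (\<alpha> * real n)) * 2 ^ n * 2 powr (- (real n * (1 - \<zeta>))) \<le> (2 powr (- \<Delta> * real n))^2" .
qed



lemma key:
  fixes A :: "bool list list pmf" and x :: "bool list pmf"
  assumes suppA: "set_pmf A \<subseteq> LL (LL UNIV n) m" and suppx: "set_pmf x \<subseteq> LL UNIV n" and im: "i < m"
    and HSi: "\<forall>A0\<in>set_pmf A. min_entropy (map_pmf (\<lambda>B. B ! i) (cond_pmf A {B. take i B = take i A0})) \<ge> k1"
    and xb: "\<forall>v. pmf x v \<le> b2"
    and num: "sqrt (b2 * 2^n * 2 powr (-k1)) \<le> \<epsilon>"
  shows "(\<Sum>v\<in>LL UNIV n. pmf x v * bias (pmf A) (\<lambda>r. dot2 r v) i m (LL UNIV n)) \<le> \<epsilon>"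
proof -
  let ?V = "LL (UNIV::bool set) n"
  let ?M = "LL ?V m"
  have finV: "finite ?V" by (simp add: LL_finite)
  have finM: "finite ?M" using finV by (simp add: LL_finite)
  have finI: "finite (LL ?V i)" using finV by (simp add: LL_finite)
  define c where "c a = (\<Sum>B\<in>?M. if take i B = a then pmf A B else 0)" for a
  define K where "K a v = (\<Sum>B\<in>?M. if take i B = a then pmf A B * sg (dot2 (B!i) v) else 0)" for a v
  have takeM: "take i B \<in> LL ?V i" if "B \<in> ?M" for B
    using that im unfolding LL_def by (auto dest: in_set_takeD)
  have nthM: "B ! i \<in> ?V" if "B \<in> ?M" for B
  proof -
    have "length B = m" "set B \<subseteq> ?V" using that unfolding LL_def by auto
    then show ?thesis using im nth_mem[of i B] by auto
  qed
  have sumc: "(\<Sum>a\<in>LL ?V i. c a) = 1"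
  proof -
    have "(\<Sum>a\<in>LL ?V i. c a) = (\<Sum>B\<in>?M. \<Sum>a\<in>LL ?V i. if take i B = a then pmf A B else 0)"
      unfolding c_def by (rule sum.swap)
    also have "\<dots> = (\<Sum>B\<in>?M. pmf A B)"
      using finI takeM by (intro sum.cong refl) simp
    also have "\<dots> = 1" using finM suppA by (rule sum_pmf_eq_1)
    finally show ?thesis .
  qed
  have per_a: "(\<Sum>v\<in>?V. pmf x v * \<bar>K a v\<bar>) \<le> c a * \<epsilon>" if aI: "a \<in> LL ?V i" for a
  proof (cases "c a = 0")
    case True
    have "\<forall>B\<in>?M. (if take i B = a then pmf A B else 0) = 0"
      using True finM unfolding c_def by (subst sum_nonneg_eq_0_iff[symmetric]) auto
    then have "K a v = 0" for v unfolding K_def by (intro sum.neutral) auto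
    then show ?thesis using True by simp
  next
    case False
    have c0: "0 \<le> c a" unfolding c_def by (intro sum_nonneg) auto
    with False have cpos: "0 < c a" by simp
    have "\<exists>B\<in>?M. (if take i B = a then pmf A B else 0) \<noteq> 0"
    proof (rule ccontr)
      assume "\<not> (\<exists>B\<in>?M. (if take i B = a then pmf A B else 0) \<noteq> 0)"
      then have "c a = 0" unfolding c_def by (intro sum.neutral) blast
      with False show False by simp
    qed
    then obtain B0 where "B0 \<in> ?M" "(if take i B0 = a then pmf A B0 else 0) \<noteq> 0" by blast
    then have B0: "B0 \<in> ?M" "take i B0 = a" "pmf A B0 \<noteq> 0" by (auto split: if_splits)
    have B0A: "B0 \<in> set_pmf A" using B0(3) by (simp add: set_pmf_iff)
    define E where "E = {B. take i B = take i B0}"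
    have ne: "set_pmf A \<inter> E \<noteq> {}" using B0A unfolding E_def by auto
    have mE: "measure A E = c a"
      unfolding c_def using measure_sum[OF finM suppA, of E] B0(2) by (simp add: E_def)
    define q where "q r = pmf (map_pmf (\<lambda>B. B ! i) (cond_pmf A E)) r" for r
    have suppC: "set_pmf (cond_pmf A E) \<subseteq> ?M" using set_cond_pmf[OF ne] suppA by auto
    have q_eq: "q r = (\<Sum>B\<in>?M. if B ! i = r then (if take i B = a then pmf A B / c a else 0) else 0)" for r
    proof -
      have "q r = (\<Sum>B\<in>?M. if B ! i = r then pmf (cond_pmf A E) B else 0)"
        unfolding q_def by (rule pmf_map_sum[OF finM suppC])
      also have "\<dots> = (\<Sum>B\<in>?M. if B ! i = r then (if B \<in> E then pmf A B / c a else 0) else 0)"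
        by (simp only: pmf_cond[OF ne] mE)
      also have "\<dots> = (\<Sum>B\<in>?M. if B ! i = r then (if take i B = a then pmf A B / c a else 0) else 0)"
        by (intro sum.cong refl) (auto simp: E_def B0(2))
      finally show ?thesis .
    qed
    have qsum: "(\<Sum>r\<in>?V. q r * sg (dot2 r v)) = K a v / c a" for v
    proof -
      have "(\<Sum>r\<in>?V. q r * sg (dot2 r v))
          = (\<Sum>r\<in>?V. \<Sum>B\<in>?M. if B ! i = r then (if take i B = a then pmf A B / c a else 0) * sg (dot2 r v) else 0)"
        unfolding q_eq sum_distrib_right by (intro sum.cong refl) auto
      also have "\<dots> = (\<Sum>B\<in>?M. \<Sum>r\<in>?V. if B ! i = r then (if take i B = a then pmf A B / c a else 0) * sg (dot2 r v) else 0)"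
        by (rule sum.swap)
      also have "\<dots> = (\<Sum>B\<in>?M. (if take i B = a then pmf A B / c a else 0) * sg (dot2 (B ! i) v))"
        using finV nthM by (intro sum.cong refl) simp
      also have "\<dots> = K a v / c a"
        unfolding K_def sum_divide_distrib by (intro sum.cong refl) auto
      finally show ?thesis .
    qed
    have ext: "(\<Sum>v\<in>?V. pmf x v * \<bar>\<Sum>r\<in>?V. q r * sg (dot2 r v)\<bar>) \<le> sqrt (b2 * 2^n * 2 powr (-k1))"
    proof (rule extractor)
      show "\<forall>r. 0 \<le> q r" unfolding q_def by simp
      show "(\<Sum>r\<in>?V. q r) \<le> 1"
      proof -
        have "(\<Sum>r\<in>?V. q r) = measure (map_pmf (\<lambda>B. B ! i) (cond_pmf A E)) ?V"
          unfolding q_def by (simp add: measure_measure_pmf_finite[OF finV])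
        then show ?thesis by simp
      qed
      show "\<forall>r. q r \<le> 2 powr (-k1)"
        using min_entropy_bound[OF HSi[rule_format, OF B0A]] unfolding q_def E_def by blast
      show "\<forall>v. 0 \<le> pmf x v" by simp
      show "(\<Sum>v\<in>?V. pmf x v) = 1" using finV suppx by (rule sum_pmf_eq_1)
      show "\<forall>v. pmf x v \<le> b2" by (rule xb)
    qed
    have "(\<Sum>v\<in>?V. pmf x v * \<bar>K a v\<bar>) = c a * (\<Sum>v\<in>?V. pmf x v * \<bar>\<Sum>r\<in>?V. q r * sg (dot2 r v)\<bar>)"
      unfolding qsum sum_distrib_left using cpos by (intro sum.cong refl) (simp add: abs_div)
    also have "\<dots> \<le> c a * \<epsilon>" using ext num c0 by (intro mult_left_mono) auto
    finally show ?thesis .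
  qed
  have "(\<Sum>v\<in>?V. pmf x v * bias (pmf A) (\<lambda>r. dot2 r v) i m ?V) = (\<Sum>a\<in>LL ?V i. \<Sum>v\<in>?V. pmf x v * \<bar>K a v\<bar>)"
    unfolding bias_def K_def sum_distrib_left by (rule sum.swap)
  also have "\<dots> \<le> (\<Sum>a\<in>LL ?V i. c a * \<epsilon>)" by (intro sum_mono per_a)
  also have "\<dots> = \<epsilon>" using sumc by (simp add: sum_distrib_right[symmetric])
  finally show ?thesis .
qed



theorem lemmaG9:
  fixes m n :: nat and \<eta> \<zeta> \<Delta> \<alpha> :: real
    and A :: "bool list list pmf" and x :: "bool list pmf"
  assumes "0 < m" "m \<le> n"
    and "0 \<le> \<eta>" "\<eta> \<le> 1"
    and "\<Delta> > 0" "\<alpha> \<ge> 2 * \<Delta> + \<zeta>"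
    and "\<forall>B \<in> set_pmf A. is_matrix m n B"
    and "block_source \<eta> (real n * (1 - \<zeta>)) m A"
    and "\<forall>v \<in> set_pmf x. length v = n"
    and "min_entropy x \<ge> \<alpha> * real n"
  shows "\<exists>T \<subseteq> {..<m}. real (card T) \<ge> (1 - \<eta>) * real m \<and>
           stat_dist (map_pmf (\<lambda>(B, v). nths (mat_vec2 B v) T) (pair_pmf A x))
                     (pmf_of_set {w. length w = card T})
             \<le> real (card T) * 2 powr (- \<Delta> * real n)"
proof -
  let ?V = "LL (UNIV::bool set) n"
  let ?M = "LL ?V m"
  have finV: "finite ?V" by (simp add: LL_finite)
  have finM: "finite ?M" using finV by (simp add: LL_finite)
  have suppA: "set_pmf A \<subseteq> ?M" using assms(7) unfolding is_matrix_def LL_def by auto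
  have suppx: "set_pmf x \<subseteq> ?V" using assms(9) unfolding LL_def by auto
  obtain S where SS: "S \<subseteq> {..<m} \<and> real (card S) \<le> \<eta> * real m \<and> (\<forall>A0\<in>set_pmf A. \<forall>i<m. i \<notin> S \<longrightarrow>
       min_entropy (map_pmf (\<lambda>B. B ! i) (cond_pmf A {B. take i B = take i A0})) \<ge> real n * (1 - \<zeta>))"
    using assms(8) unfolding block_source_def by (elim exE) (rule that)
  have S1: "S \<subseteq> {..<m}" using SS by (rule conjunct1)
  have S2: "real (card S) \<le> \<eta> * real m" using SS[THEN conjunct2] by (rule conjunct1)
  have HS: "\<forall>A0\<in>set_pmf A. \<forall>i<m. i \<notin> S \<longrightarrow>
       min_entropy (map_pmf (\<lambda>B. B ! i) (cond_pmf A {B. take i B = take i A0})) \<ge> real n * (1 - \<zeta>)"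
    using SS[THEN conjunct2] by (rule conjunct2)
  note S = S1 S2
  define T where "T = {..<m} - S"
  have Tsub: "T \<subseteq> {..<m}" unfolding T_def by auto
  have fT: "finite T" using Tsub finite_subset by blast
  have cardT: "real (card T) \<ge> (1 - \<eta>) * real m"
  proof -
    have fS: "finite S" using S(1) finite_subset by blast
    have cS: "card S \<le> m" using card_mono[OF finite_lessThan S(1)] by simp
    have "card T = m - card S" unfolding T_def using card_Diff_subset[OF fS S(1)] by simp
    then have "real (card T) = real m - real (card S)" using cS by (simp add: of_nat_diff)
    moreover have "(1 - \<eta>) * real m = real m - \<eta> * real m" by (simp add: left_diff_distrib)
    ultimately show ?thesis using S(2) by linarith
  qed
  let ?t = "card T"
  define \<epsilon> where "\<epsilon> = 2 powr (- \<Delta> * real n)"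
  define W where "W = {w :: bool list. length w = ?t}"
  have WL: "W = LL UNIV ?t" unfolding W_def LL_UNIV ..
  have finW: "finite W" unfolding WL by (simp add: LL_finite)
  have cardW: "card W = 2 ^ ?t" unfolding WL by (rule card_LL_bool)
  have Wne: "W \<noteq> {}" unfolding W_def by (metis (mono_tags) empty_iff length_replicate mem_Collect_eq)
  define P where "P = map_pmf (\<lambda>(B, v). nths (mat_vec2 B v) T) (pair_pmf A x)"
  define G where "G v w = (\<Sum>B\<in>?M. if nths (map (\<lambda>r. dot2 r v) B) T = w then pmf A B else 0)" for v w
  have pmfP: "pmf P w = (\<Sum>v\<in>?V. pmf x v * G v w)" for w
  proof -
    have "pmf P w = (\<Sum>z\<in>?M \<times> ?V. if (\<lambda>(B, v). nths (mat_vec2 B v) T) z = w then pmf (pair_pmf A x) z else 0)"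
      unfolding P_def using finM finV suppA suppx by (intro pmf_map_sum) auto
    also have "\<dots> = (\<Sum>B\<in>?M. \<Sum>v\<in>?V. if nths (map (\<lambda>r. dot2 r v) B) T = w then pmf A B * pmf x v else 0)"
    proof -
      have pp: "pmf (pair_pmf A x) z = pmf A (fst z) * pmf x (snd z)" for z by (cases z) (simp add: pmf_pair)
      show ?thesis by (simp add: sum.cartesian_product mat_vec2_def case_prod_beta) (rule sum.cong[OF refl], simp only: pp)
    qed
    also have "\<dots> = (\<Sum>v\<in>?V. \<Sum>B\<in>?M. if nths (map (\<lambda>r. dot2 r v) B) T = w then pmf A B * pmf x v else 0)"
      by (rule sum.swap)
    also have "\<dots> = (\<Sum>v\<in>?V. pmf x v * G v w)"
      unfolding G_def sum_distrib_left by (intro sum.cong refl) auto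
    finally show ?thesis .
  qed
  have setP: "set_pmf P \<subseteq> W"
  proof
    fix w assume "w \<in> set_pmf P"
    then obtain B v where Bv: "B \<in> set_pmf A" "w = nths (mat_vec2 B v) T"
      unfolding P_def by auto
    have "length B = m" using Bv(1) suppA unfolding LL_def by auto
    moreover have "{i. i < m \<and> i \<in> T} = T" using Tsub by auto
    ultimately show "w \<in> W" unfolding W_def Bv(2) by (simp add: length_nths mat_vec2_def)
  qed
  have sumA: "(\<Sum>B\<in>?M. pmf A B) = 1" using finM suppA by (rule sum_pmf_eq_1)
  have sumx: "(\<Sum>v\<in>?V. pmf x v) = 1" using finV suppx by (rule sum_pmf_eq_1)
  have xb: "\<forall>v. pmf x v \<le> 2 powr (- (\<alpha> * real n))"
    using min_entropy_bound[OF assms(10)] by blast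
  have num: "sqrt (2 powr (- (\<alpha> * real n)) * 2 ^ n * 2 powr (- (real n * (1 - \<zeta>)))) \<le> \<epsilon>"
    unfolding \<epsilon>_def by (rule numeric[OF assms(6)])
  have L1: "(\<Sum>w\<in>W. \<bar>pmf P w - 1 / 2 ^ ?t\<bar>) \<le> real ?t * \<epsilon>"
  proof -
    have "(\<Sum>w\<in>W. \<bar>pmf P w - 1 / 2 ^ ?t\<bar>) = (\<Sum>w\<in>W. \<bar>\<Sum>v\<in>?V. pmf x v * (G v w - 1 / 2 ^ ?t)\<bar>)"
      unfolding pmfP by (simp add: right_diff_distrib sum_subtractf sum_divide_distrib[symmetric] sumx)
    also have "\<dots> \<le> (\<Sum>w\<in>W. \<Sum>v\<in>?V. pmf x v * \<bar>G v w - 1 / 2 ^ ?t\<bar>)"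
      by (intro sum_mono order_trans[OF sum_abs]) (simp add: abs_mult)
    also have "\<dots> = (\<Sum>v\<in>?V. pmf x v * dev (pmf A) (\<lambda>r. dot2 r v) T m ?V)"
      unfolding dev_def sumA G_def WL[symmetric] sum_distrib_left by (rule sum.swap)
    also have "\<dots> \<le> (\<Sum>v\<in>?V. pmf x v * (\<Sum>i\<in>T. bias (pmf A) (\<lambda>r. dot2 r v) i m ?V))"
      using finV Tsub by (intro sum_mono mult_left_mono hybrid) auto
    also have "\<dots> = (\<Sum>i\<in>T. \<Sum>v\<in>?V. pmf x v * bias (pmf A) (\<lambda>r. dot2 r v) i m ?V)"
      unfolding sum_distrib_left by (rule sum.swap)
    also have "\<dots> \<le> (\<Sum>i\<in>T. \<epsilon>)"
    proof (intro sum_mono)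
      fix i assume iT: "i \<in> T"
      then have im: "i < m" and iS: "i \<notin> S" using Tsub T_def by auto
      show "(\<Sum>v\<in>?V. pmf x v * bias (pmf A) (\<lambda>r. dot2 r v) i m ?V) \<le> \<epsilon>"
        by (rule key[OF suppA suppx im _ xb num]) (use HS im iS in auto)
    qed
    also have "\<dots> = real ?t * \<epsilon>" by simp
    finally show ?thesis .
  qed
  have sd: "stat_dist P (pmf_of_set W) = (1/2) * (\<Sum>w\<in>W. \<bar>pmf P w - 1 / 2 ^ ?t\<bar>)"
  proof -
    have "set_pmf P \<union> set_pmf (pmf_of_set W) = W" using setP finW Wne by auto
    then show ?thesis unfolding stat_dist_def using finW Wne cardW
      by (intro arg_cong[where f="\<lambda>s. (1/2) * s"] sum.cong) auto
  qed
  have eps0: "0 \<le> \<epsilon>" unfolding \<epsilon>_def by simp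
  show ?thesis
  proof (intro exI[of _ T] conjI)
    show "T \<subseteq> {..<m}" by (rule Tsub)
    show "(1 - \<eta>) * real m \<le> real (card T)" by (rule cardT)
    have "stat_dist P (pmf_of_set W) \<le> (1/2) * (real ?t * \<epsilon>)" unfolding sd using L1 by simp
    also have "\<dots> \<le> real ?t * \<epsilon>" using eps0 by simp
    finally show "stat_dist (map_pmf (\<lambda>(B, v). nths (mat_vec2 B v) T) (pair_pmf A x))
                     (pmf_of_set {w. length w = card T}) \<le> real (card T) * 2 powr (- \<Delta> * real n)"
      unfolding P_def W_def \<epsilon>_def .
  qed
qed

end
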